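(* Every graph $G$ with $v(G) \geq 3$ vertices satisfies $\tau_4(G) \leq v(G) - 3$ in the $K_4$-bootstrap percolation process. In other words, for each $t \geq 1$, the graphs in the family $\mathcal H_t$ (for $r=4$, which have $t+3$ vertices and saturation time $t$) are vertex-minimal among graphs $G$ with $\tau_4(G) = t$.
   Context: $K_4$-bootstrap percolation: for a graph $G$ on vertex set $[n]$, set $G_0 := G$ and $G_{t+1} := G_t \cup \{e : \exists$ a copy $H$ of $K_4$ with $e \in H \subseteq G_t \cup \{e\}\}$; the saturation time is $\tau_4(G) := \min\{t \geq 0 : G_t = \bigcup_s G_s\}$. The family $\mathcal H_t$ (for $r=4$): start with a triangle (body) on $V_0$ and a fixed vertex $v_0 \in V_0$; $\mathcal H_1 = \{K_4 - e\}$, obtained by adding a vertex $v_1$ adjacent to $v_0$ and one other body vertex; for $t \geq 2$, $H_t \in \mathcal H_t$ is obtained from some $H_{t-1} \in \mathcal H_{t-1}$ (on $V_{t-1}$) by adding a new vertex $v_t$ with exactly $2$ neighbours in $V_{t-1}$, one of which is $v_{t-1}$ and the other of which is not a neighbour of $v_{t-1}$. *)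

theory Defs
  imports Main
begin

definition graph_on :: "nat \<Rightarrow> nat set set \<Rightarrow> bool" where
  "graph_on n G \<longleftrightarrow> (\<forall>e\<in>G. e \<subseteq> {0..<n} \<and> card e = 2)"

definition clique_edges :: "nat set \<Rightarrow> nat set set" where
  "clique_edges K = {e. e \<subseteq> K \<and> card e = 2}"

definition k4_step :: "nat \<Rightarrow> nat set set \<Rightarrow> nat set set" where
  "k4_step n G = G \<union> {e. e \<subseteq> {0..<n} \<and> card e = 2 \<and>
      (\<exists>K. K \<subseteq> {0..<n} \<and> card K = 4 \<and> e \<in> clique_edges K \<and>
           clique_edges K \<subseteq> G \<union> {e})}"

definition k4_proc :: "nat \<Rightarrow> nat set set \<Rightarrow> nat \<Rightarrow> nat set set" where
  "k4_proc n G t = (k4_step n ^^ t) G"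

definition tau4 :: "nat \<Rightarrow> nat set set \<Rightarrow> nat" where
  "tau4 n G = (LEAST t. k4_proc n G t = (\<Union>s. k4_proc n G s))"

end

theory Submission
  imports Defs
begin

definition cl :: "nat \<Rightarrow> nat set set \<Rightarrow> nat \<Rightarrow> nat set \<Rightarrow> bool" where
  "cl n G t S \<longleftrightarrow> (\<forall>x\<in>S. \<forall>y\<in>S. x \<noteq> y \<longrightarrow> {x,y} \<in> k4_proc n G t)"

definition good :: "nat \<Rightarrow> nat set set \<Rightarrow> nat set \<Rightarrow> bool" where
  "good n G S \<longleftrightarrow> S \<subseteq> {0..<n} \<and> 2 \<le> card S \<and> cl n G (card S - 3) S"

lemma proc_Suc: "k4_proc n G (Suc t) = k4_step n (k4_proc n G t)"
  by (simp add: k4_proc_def)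

lemma proc_0: "k4_proc n G 0 = G"
  by (simp add: k4_proc_def)

lemma proc_mono: "s \<le> t \<Longrightarrow> k4_proc n G s \<subseteq> k4_proc n G t"
proof (induction t)
  case 0 then show ?case by simp
next
  case (Suc t)
  then show ?case
    by (cases "s = Suc t") (auto simp: proc_Suc k4_step_def)
qed

lemma cl_mono: "cl n G s S \<Longrightarrow> s \<le> t \<Longrightarrow> cl n G t S"
  unfolding cl_def using proc_mono by blast

lemma step_edge:
  assumes "distinct [a,b,u,w]" "a < n" "b < n" "u < n" "w < n"
    and "{a,u} \<in> k4_proc n G t" "{a,w} \<in> k4_proc n G t" "{u,w} \<in> k4_proc n G t"
        "{b,u} \<in> k4_proc n G t" "{b,w} \<in> k4_proc n G t"
  shows "{a,b} \<in> k4_proc n G (Suc t)"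
proof -
  let ?K = "{a,b,u,w}"
  have K: "?K \<subseteq> {0..<n}" "card ?K = 4" using assms by auto
  have e: "{a,b} \<subseteq> {0..<n}" "card {a,b} = 2" "{a,b} \<in> clique_edges ?K"
    using assms by (auto simp: clique_edges_def)
  have "clique_edges ?K \<subseteq> k4_proc n G t \<union> {{a,b}}"
  proof
    fix e assume "e \<in> clique_edges ?K"
    then have "e \<subseteq> ?K" "card e = 2" by (auto simp: clique_edges_def)
    then obtain x y where xy: "e = {x,y}" "x \<noteq> y" by (auto simp: card_2_iff)
    with \<open>e \<subseteq> ?K\<close> have "x \<in> ?K" "y \<in> ?K" by auto
    then show "e \<in> k4_proc n G t \<union> {{a,b}}"
      using xy assms(6-10) by (auto simp: insert_commute)
  qed
  with K e have "{a,b} \<in> k4_step n (k4_proc n G t)"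
    unfolding k4_step_def by blast
  then show ?thesis by (simp add: proc_Suc)
qed

lemma merge:
  assumes A: "good n G A" and B: "good n G B" and uw: "u \<noteq> w" "u \<in> A" "w \<in> A" "u \<in> B" "w \<in> B"
  shows "good n G (A \<union> B)"
proof (cases "A \<subseteq> B \<or> B \<subseteq> A")
  case True
  then show ?thesis using A B by (auto simp: sup_absorb1 sup_absorb2)
next
  case False
  have fA: "finite A" and fB: "finite B" using A B unfolding good_def
    by (auto intro: finite_subset)
  have cA: "card A < card (A \<union> B)" using False fA fB
    by (intro psubset_card_mono) auto
  have cB: "card B < card (A \<union> B)" using False fA fB
    by (intro psubset_card_mono) auto
  define m where "m = max (card A - 3) (card B - 3)"
  have big: "3 \<le> card A \<or> 3 \<le> card B"
  proof (rule ccontr)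
    assume "\<not> ?thesis"
    then have "card A = 2" "card B = 2" using A B by (auto simp: good_def)
    then have "A = {u,w}" "B = {u,w}" using uw fA fB
      by (metis card_2_iff doubleton_eq_iff insert_iff singletonD)+
    then show False using False by auto
  qed
  have mle: "Suc m \<le> card (A \<union> B) - 3" using big cA cB unfolding m_def by auto
  have clA: "cl n G m A" using A cl_mono unfolding good_def m_def by (meson max.cobounded1)
  have clB: "cl n G m B" using B cl_mono unfolding good_def m_def by (meson max.cobounded2)
  have sub: "A \<union> B \<subseteq> {0..<n}" using A B by (auto simp: good_def)
  have "cl n G (Suc m) (A \<union> B)"
    unfolding cl_def
  proof (intro ballI impI)
    fix x y assume xy: "x \<in> A \<union> B" "y \<in> A \<union> B" "x \<noteq> y"
    have cross: "{a,b} \<in> k4_proc n G (Suc m)" if "a \<in> A" "a \<notin> B" "b \<in> B" "b \<notin> A" for a b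
    proof (rule step_edge[where u=u and w=w])
      show "distinct [a, b, u, w]" using that uw by auto
      show "a < n" "b < n" "u < n" "w < n" using that uw sub by auto
      show "{a, u} \<in> k4_proc n G m" "{a, w} \<in> k4_proc n G m" "{u, w} \<in> k4_proc n G m"
        using clA that uw unfolding cl_def by auto
      show "{b, u} \<in> k4_proc n G m" "{b, w} \<in> k4_proc n G m"
        using clB that uw unfolding cl_def by auto
    qed
    show "{x, y} \<in> k4_proc n G (Suc m)"
    proof -
      have "x \<in> A \<and> y \<in> A \<or> x \<in> B \<and> y \<in> B \<or> (x \<in> A \<and> x \<notin> B \<and> y \<in> B \<and> y \<notin> A)
            \<or> (y \<in> A \<and> y \<notin> B \<and> x \<in> B \<and> x \<notin> A)" using xy by blast
      then show ?thesis
      proof (elim disjE)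
        assume "x \<in> A \<and> y \<in> A" then show ?thesis
          using clA cl_mono[of n G m A "Suc m"] xy unfolding cl_def by auto
      next
        assume "x \<in> B \<and> y \<in> B" then show ?thesis
          using clB cl_mono[of n G m B "Suc m"] xy unfolding cl_def by auto
      next
        assume "x \<in> A \<and> x \<notin> B \<and> y \<in> B \<and> y \<notin> A" then show ?thesis using cross by blast
      next
        assume "y \<in> A \<and> y \<notin> B \<and> x \<in> B \<and> x \<notin> A" then show ?thesis
          using cross[of y x] by (simp add: insert_commute)
      qed
    qed
  qed
  then have "cl n G (card (A \<union> B) - 3) (A \<union> B)" using mle cl_mono by blast
  moreover have "2 \<le> card (A \<union> B)" using cA A by (auto simp: good_def)
  ultimately show ?thesis using sub by (simp add: good_def)
qed

lemma add_vertex: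
  assumes A: "good n G A" and xy: "x \<noteq> y" "x \<in> A" "y \<in> A" and z: "z \<notin> A" "z < n"
    and zx: "{z,x} \<in> k4_proc n G (card A - 3)" and zy: "{z,y} \<in> k4_proc n G (card A - 3)"
  shows "good n G (insert z A)"
proof -
  have fA: "finite A" using A unfolding good_def by (auto intro: finite_subset)
  have cz: "card (insert z A) = Suc (card A)" using fA z by simp
  have sub: "insert z A \<subseteq> {0..<n}" using A z by (auto simp: good_def)
  have clA: "cl n G (card A - 3) A" using A by (simp add: good_def)
  have "cl n G (card A - 2) (insert z A)"
    unfolding cl_def
  proof (intro ballI impI)
    fix a b assume ab: "a \<in> insert z A" "b \<in> insert z A" "a \<noteq> b"
    have le: "card A - 3 \<le> card A - 2" by simp
    have zc: "{z,c} \<in> k4_proc n G (card A - 2)" if c: "c \<in> A" for c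
    proof (cases "c = x \<or> c = y")
      case True then show ?thesis using zx zy proc_mono[OF le] by auto
    next
      case False
      then have "card A \<ge> 3"
      proof -
        have "{x,y,c} \<subseteq> A" using xy c by auto
        then have "card {x,y,c} \<le> card A" using fA card_mono by blast
        then show ?thesis using False xy by auto
      qed
      then have eq: "card A - 2 = Suc (card A - 3)" by simp
      show ?thesis unfolding eq
      proof (rule step_edge[where u=x and w=y])
        show "distinct [z, c, x, y]" using False xy z c by auto
        show "z < n" "c < n" "x < n" "y < n" using z sub c xy by auto
        show "{z, x} \<in> k4_proc n G (card A - 3)" "{z, y} \<in> k4_proc n G (card A - 3)" by fact+
        show "{x, y} \<in> k4_proc n G (card A - 3)" "{c, x} \<in> k4_proc n G (card A - 3)"
          "{c, y} \<in> k4_proc n G (card A - 3)"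
          using clA xy c False unfolding cl_def by auto
      qed
    qed
    show "{a, b} \<in> k4_proc n G (card A - 2)"
    proof (cases "a = z")
      case True then show ?thesis using zc ab by auto
    next
      case False
      note aF = False
      show ?thesis
      proof (cases "b = z")
        case True then show ?thesis using zc[of a] ab aF by (auto simp: insert_commute)
      next
        case False
        then have "{a,b} \<in> k4_proc n G (card A - 3)" using aF ab clA unfolding cl_def by auto
        then show ?thesis using proc_mono[OF le] by blast
      qed
    qed
  qed
  then show ?thesis using sub cz A by (auto simp: good_def)
qed

lemma tri_max:
  assumes "x \<noteq> y" "y \<noteq> z" "x \<noteq> z"
    and A: "good n G A" "x \<in> A" "y \<in> A"
    and B: "good n G B" "y \<in> B" "z \<in> B"
    and C: "good n G C" "x \<in> C" "z \<in> C"
    and "card B \<le> card A" "card C \<le> card A"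
  shows "\<exists>S. good n G S \<and> x \<in> S \<and> y \<in> S \<and> z \<in> S"
proof (cases "z \<in> A")
  case True then show ?thesis using A by blast
next
  case False
  have "{z,x} \<in> k4_proc n G (card C - 3)" using C assms(3) unfolding good_def cl_def
    by (auto simp: insert_commute)
  then have zx: "{z,x} \<in> k4_proc n G (card A - 3)" using proc_mono assms(14) by (meson diff_le_mono subsetD)
  have "{z,y} \<in> k4_proc n G (card B - 3)" using B assms(2) unfolding good_def cl_def
    by (auto simp: insert_commute)
  then have zy: "{z,y} \<in> k4_proc n G (card A - 3)" using proc_mono assms(13) by (meson diff_le_mono subsetD)
  have "z < n" using B unfolding good_def by auto
  then have "good n G (insert z A)" using add_vertex[OF A(1) assms(1) A(2,3) False _ zx zy] by blast
  then show ?thesis using A by blast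
qed

lemma tri:
  assumes "x \<noteq> y" "y \<noteq> z" "x \<noteq> z"
    and A: "good n G A" "x \<in> A" "y \<in> A"
    and B: "good n G B" "y \<in> B" "z \<in> B"
    and C: "good n G C" "x \<in> C" "z \<in> C"
  shows "\<exists>S. good n G S \<and> x \<in> S \<and> y \<in> S \<and> z \<in> S"
proof -
  consider "card B \<le> card A \<and> card C \<le> card A" | "card A \<le> card B \<and> card C \<le> card B"
    | "card A \<le> card C \<and> card B \<le> card C" by linarith
  then show ?thesis
  proof cases
    case 1 then show ?thesis using tri_max[OF assms] by blast
  next
    case 2
    from tri_max[of y z x n G B C A] 2 assms show ?thesis by blast
  next
    case 3
    from tri_max[of x z y n G C B A] 3 assms show ?thesis by blast
  qed
qed

lemma good_edge:
  assumes "e \<in> G" "graph_on n G" shows "good n G e"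
proof -
  have e: "e \<subseteq> {0..<n}" "card e = 2" using assms unfolding graph_on_def by auto
  then obtain a b where ab: "e = {a,b}" "a \<noteq> b" by (auto simp: card_2_iff)
  have "cl n G 0 e" unfolding cl_def proc_0
  proof (intro ballI impI)
    fix x y assume "x \<in> e" "y \<in> e" "x \<noteq> y"
    then have "{x,y} = e" using ab by auto
    then show "{x,y} \<in> G" using assms by simp
  qed
  then show ?thesis using e by (simp add: good_def)
qed

lemma in_W:
  assumes gG: "graph_on n G"
  shows "e \<in> k4_proc n G t \<Longrightarrow> \<exists>S. good n G S \<and> e \<subseteq> S \<and> card e = 2"
proof (induction t arbitrary: e)
  case 0
  then have "e \<in> G" by (simp add: proc_0)
  then show ?case using good_edge[OF _ gG] gG unfolding graph_on_def by blast
next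
  case (Suc t)
  show ?case
  proof (cases "e \<in> k4_proc n G t")
    case True then show ?thesis using Suc.IH by blast
  next
    case False
    then obtain K where e: "e \<subseteq> {0..<n}" "card e = 2" and K: "K \<subseteq> {0..<n}" "card K = 4"
      "e \<in> clique_edges K" "clique_edges K \<subseteq> k4_proc n G t \<union> {e}"
      using Suc.prems unfolding proc_Suc k4_step_def by blast
    obtain a b where ab: "e = {a,b}" "a \<noteq> b" using e by (auto simp: card_2_iff)
    have abK: "a \<in> K" "b \<in> K" using K(3) ab by (auto simp: clique_edges_def)
    have fK: "finite K" using K by (auto intro: finite_subset)
    have "card (K - {a,b}) = 2" using K(2) abK ab fK by (simp add: card_Diff_subset)
    then obtain c d where cd: "K - {a,b} = {c,d}" "c \<noteq> d" by (auto simp: card_2_iff)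
    have cdK: "c \<in> K" "d \<in> K" "c \<noteq> a" "c \<noteq> b" "d \<noteq> a" "d \<noteq> b" using cd by blast+
    have edge: "\<exists>S. good n G S \<and> p \<in> S \<and> q \<in> S" if "p \<in> K" "q \<in> K" "p \<noteq> q" "{p,q} \<noteq> e" for p q
    proof -
      have "{p,q} \<in> clique_edges K" using that by (auto simp: clique_edges_def)
      then have "{p,q} \<in> k4_proc n G t" using K(4) that by auto
      then show ?thesis using Suc.IH by blast
    qed
    have ne: "{p,q} \<noteq> e" if "p \<noteq> a" "p \<noteq> b" for p q using that ab by auto
    obtain S1 where S1: "good n G S1" "a \<in> S1" "c \<in> S1" using edge[of a c] cdK abK ne[of c a]
      by (metis insert_commute)
    obtain S2 where S2: "good n G S2" "c \<in> S2" "d \<in> S2" using edge[of c d] cdK cd ne by blast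
    obtain S3 where S3: "good n G S3" "a \<in> S3" "d \<in> S3" using edge[of a d] cdK abK ne[of d a]
      by (metis insert_commute)
    obtain S4 where S4: "good n G S4" "b \<in> S4" "c \<in> S4" using edge[of b c] cdK abK ne[of c b]
      by (metis insert_commute)
    obtain S5 where S5: "good n G S5" "b \<in> S5" "d \<in> S5" using edge[of b d] cdK abK ne[of d b]
      by (metis insert_commute)
    obtain T1 where T1: "good n G T1" "a \<in> T1" "c \<in> T1" "d \<in> T1"
      using tri[of a c d n G S1 S2 S3] S1 S2 S3 cdK cd by blast
    obtain T2 where T2: "good n G T2" "b \<in> T2" "c \<in> T2" "d \<in> T2"
      using tri[of b c d n G S4 S2 S5] S4 S2 S5 cdK cd by blast
    have "good n G (T1 \<union> T2)" using merge[OF T1(1) T2(1) cd(2)] T1 T2 by blast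
    then show ?thesis using ab e T1 T2 by blast
  qed
qed

theorem theorem2:
  fixes n :: nat and G :: "nat set set"
  assumes "n \<ge> 3" and "graph_on n G"
  shows "tau4 n G \<le> n - 3"
proof -
  have all: "k4_proc n G t \<subseteq> k4_proc n G (n - 3)" for t
  proof
    fix e assume "e \<in> k4_proc n G t"
    then obtain S where S: "good n G S" "e \<subseteq> S" "card e = 2" using in_W[OF assms(2)] by blast
    obtain x y where xy: "e = {x,y}" "x \<noteq> y" using S(3) by (auto simp: card_2_iff)
    have "card S \<le> n" using S(1) unfolding good_def
      by (metis card_atLeastLessThan card_mono diff_zero finite_atLeastLessThan)
    then have "card S - 3 \<le> n - 3" by simp
    moreover have "e \<in> k4_proc n G (card S - 3)" using S xy unfolding good_def cl_def by auto
    ultimately show "e \<in> k4_proc n G (n - 3)" using proc_mono by blast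
  qed
  have "k4_proc n G (n - 3) = (\<Union>s. k4_proc n G s)" using all by blast
  then show ?thesis unfolding tau4_def by (rule Least_le)
qed

end
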